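(* Let $f_1,\dots,f_n$ be nondecreasing linear functions at least one of which is constant, and put $\beta_{\min}=\min\{\beta(f_i)\mid\alpha(f_i)=0\}$ and $\beta_{\rm OPT}=\min\{f^\sigma\mid\sigma\text{ a permutation of }[n]\}$ (each $f^\sigma$ is a constant function, identified with its value). Then $\beta_{\rm OPT}=\beta_{\min}$ if and only if $\theta(f_i)\in[\theta(\beta_{\min})-\pi,\theta(\beta_{\min})]_{2\pi}\cup\{\bot\}$ for every $i\in[n]$.
   Context: A linear function is $f(x)=ax+b$; $\alpha(f)=a$, $\beta(f)=b$; nondecreasing means $a\ge0$, constant means $a=0$. $\vec f=(b,1-a)^\top$ and $\theta(f)\in[0,2\pi)$ is its polar angle, $\theta(f)=\bot$ if $\vec f=0$. For a real $c$, $\theta(c)$ denotes the angle of the constant function $x\mapsto c$, i.e. the polar angle of $(c,1)^\top$. $[\theta_1,\theta_2]_{2\pi}=\{\theta\in[\lambda_1,\lambda_2]\mid\lambda_1-\theta_1,\lambda_2-\theta_2\in2\pi\mathbb{Z},\ \lambda_2-\lambda_1\in[0,2\pi)\}$. $f^\sigma=f_{\sigma(n)}\circ\cdots\circ f_{\sigma(1)}$. *)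

theory Defs
  imports "HOL-Analysis.Analysis" "HOL-Combinatorics.Permutations"
begin

text \<open>A linear function x \<mapsto> a x + b is represented by the pair (a, b).\<close>
type_synonym linfun = "real \<times> real"

definition alpha :: "linfun \<Rightarrow> real" where "alpha f = fst f"
definition beta :: "linfun \<Rightarrow> real" where "beta f = snd f"

definition lin :: "linfun \<Rightarrow> real \<Rightarrow> real" where
  "lin f x = alpha f * x + beta f"

definition polar_angle :: "real \<Rightarrow> real \<Rightarrow> real" where
  "polar_angle x y = (let t = Arg (Complex x y) in if t \<ge> 0 then t else t + 2 * pi)"

text \<open>theta f: polar angle of the vector (b, 1 - a); None stands for bottom.\<close>
definition theta :: "linfun \<Rightarrow> real option" where
  "theta f = (if beta f = 0 \<and> 1 - alpha f = 0 then None
              else Some (polar_angle (beta f) (1 - alpha f)))"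

definition theta_const :: "real \<Rightarrow> real" where
  "theta_const c = polar_angle c 1"

definition arc2pi :: "real \<Rightarrow> real \<Rightarrow> real set" where
  "arc2pi t1 t2 = {t. \<exists>l1 l2. l1 \<le> t \<and> t \<le> l2 \<and>
      (\<exists>k::int. l1 - t1 = 2 * pi * k) \<and> (\<exists>k::int. l2 - t2 = 2 * pi * k) \<and>
      0 \<le> l2 - l1 \<and> l2 - l1 < 2 * pi}"

text \<open>f^sigma = f_{sigma(n)} o ... o f_{sigma(1)} (indices 0-based).\<close>
definition fsigma :: "linfun list \<Rightarrow> (nat \<Rightarrow> nat) \<Rightarrow> real \<Rightarrow> real" where
  "fsigma fs \<sigma> = fold (\<lambda>i g. lin (fs ! \<sigma> i) \<circ> g) [0..<length fs] id"

end

theory Submission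
  imports Defs
begin


lemma polar_repr:
  assumes "x \<noteq> 0 \<or> y \<noteq> 0"
  shows "\<exists>r>0. x = r * cos (polar_angle x y) \<and> y = r * sin (polar_angle x y)
          \<and> 0 \<le> polar_angle x y \<and> polar_angle x y < 2*pi"
proof -
  define z where "z = Complex x y"
  have z0: "z \<noteq> 0" using assms by (auto simp: z_def complex_eq_iff)
  have r: "rcis (cmod z) (Arg z) = z" by (rule rcis_cmod_Arg)
  have cx: "x = cmod z * cos (Arg z)" using arg_cong[OF r, of Re] by (simp add: z_def)
  have cy: "y = cmod z * sin (Arg z)" using arg_cong[OF r, of Im] by (simp add: z_def)
  have b: "-pi < Arg z" "Arg z \<le> pi" by (rule mpi_less_Arg, rule Arg_le_pi)
  have pa: "polar_angle x y = (if Arg z \<ge> 0 then Arg z else Arg z + 2*pi)"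
    by (simp add: polar_angle_def z_def Let_def)
  have n: "cmod z > 0" using z0 by simp
  have "cos (polar_angle x y) = cos (Arg z) \<and> sin (polar_angle x y) = sin (Arg z)"
    unfolding pa by (simp add: cos_periodic sin_periodic)
  moreover have "0 \<le> polar_angle x y \<and> polar_angle x y < 2*pi"
    unfolding pa using b pi_gt_zero by auto
  ultimately show ?thesis using n cx cy by metis
qed

lemma cross_aux:
  fixes x y m r s t c :: real
  assumes "x = r * cos t" "y = r * sin t" "m = s * cos c" "1 = s * sin c"
  shows "m * y - x = r * s * sin(t-c)"
proof -
  have "x = r * cos t * (s * sin c)" using assms(1,4) by simp
  then show ?thesis using assms(2,3) by (simp add: sin_diff algebra_simps)
qed

lemma arc_iff:
  assumes "x \<noteq> 0 \<or> y \<noteq> 0"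
  shows "polar_angle x y \<in> arc2pi (theta_const m - pi) (theta_const m) \<longleftrightarrow> m * y - x \<le> 0"
proof -
  obtain r where r: "r > 0" "x = r * cos (polar_angle x y)" "y = r * sin (polar_angle x y)"
     and t: "0 \<le> polar_angle x y" "polar_angle x y < 2*pi" using polar_repr[OF assms] by blast
  obtain s where s: "s > 0" "m = s * cos (theta_const m)" "1 = s * sin (theta_const m)"
     and c: "0 \<le> theta_const m" "theta_const m < 2*pi"
    using polar_repr[of m 1] unfolding theta_const_def by auto
  define t where "t = polar_angle x y"
  define c where "c = theta_const m"
  have cross: "m * y - x = r * s * sin (t - c)"
    using cross_aux r s unfolding t_def c_def by blast
  have sc: "sin c > 0" using s(3) s(1) unfolding c_def
    by (metis zero_less_mult_iff zero_less_one less_asym)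
  have cpi: "c < pi"
  proof (rule ccontr)
    assume "\<not> c < pi"
    then have "sin c \<le> 0" using c unfolding c_def using sin_le_zero by auto
    with sc show False by simp
  qed
  have c0: "0 < c" using sc c(1) unfolding c_def by (metis le_less sin_zero)
  have "m * y - x \<le> 0 \<longleftrightarrow> sin (t - c) \<le> 0"
    using cross r(1) s(1) by (simp add: mult_le_0_iff)
  also have "\<dots> \<longleftrightarrow> t \<in> arc2pi (c - pi) c"
  proof
    assume sl: "sin (t - c) \<le> 0"
    have "t - c \<le> 0 \<or> pi \<le> t - c"
    proof (rule ccontr)
      assume "\<not> ?thesis"
      then have "sin (t - c) > 0" by (intro sin_gt_zero) auto
      with sl show False by simp
    qed
    then show "t \<in> arc2pi (c - pi) c"
    proof
      assume h: "t - c \<le> 0"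
      show ?thesis unfolding arc2pi_def mem_Collect_eq
        apply (rule exI[of _ "c - pi"], rule exI[of _ c])
        using t c0 cpi h by (auto simp: t_def intro: exI[of _ 0])
    next
      assume h: "pi \<le> t - c"
      have e: "\<exists>k::int. c + pi - (c - pi) = 2*pi*k" "\<exists>k::int. c + 2*pi - c = 2*pi*k"
        by (rule exI[of _ 1]; simp)+
      show ?thesis unfolding arc2pi_def mem_Collect_eq
        apply (rule exI[of _ "c + pi"], rule exI[of _ "c + 2*pi"])
        using t c0 cpi h e by (auto simp: t_def)
    qed
  next
    assume "t \<in> arc2pi (c - pi) c"
    then obtain l1 l2 k1 k2 where h: "l1 \<le> t" "t \<le> l2" "l1 - (c - pi) = 2*pi* of_int k1"
      "l2 - c = 2*pi* of_int k2" "0 \<le> l2 - l1" "l2 - l1 < 2*pi"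
      unfolding arc2pi_def by blast
    have "sin (t - c) = sin (t - c - 2*pi* of_int k2)"
      by (simp add: sin_diff)
    moreover have "sin (t - c - 2*pi* of_int k2) \<le> 0"
    proof -
      have "l2 - l1 = pi + 2*pi* (of_int k2 - of_int k1)" using h(3,4) by (simp add: algebra_simps)
      then have "of_int k2 - of_int k1 = (0::real)"
      proof -
        assume e: "l2 - l1 = pi + 2*pi* (of_int k2 - of_int k1)"
        have "pi*(1 + 2* (of_int k2 - of_int k1)) \<ge> 0" using e h(5) by (simp add: algebra_simps)
        then have "0 \<le> 1 + 2*(real_of_int k2 - real_of_int k1)" using pi_gt_zero by (simp add: zero_le_mult_iff)
        then have a1: "-1/2 \<le> real_of_int (k2 - k1)" by simp
        have "pi*(1 + 2* (of_int k2 - of_int k1)) < pi * 2" using e h(6) by (simp add: algebra_simps)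
        then have a2: "real_of_int (k2 - k1) < 1/2" by simp
        from a1 a2 have "k2 - k1 = 0" by linarith
        then show ?thesis by simp
      qed
      then have "l1 = c - pi + 2*pi* of_int k2" using h(3) by simp
      then have "-pi \<le> t - c - 2*pi* of_int k2" "t - c - 2*pi* of_int k2 \<le> 0" using h(1,2,4) by auto
      then show ?thesis using sin_ge_zero[of "-(t - c - 2*pi* of_int k2)"] sin_minus[of "t - c - 2*pi* of_int k2"] by linarith
    qed
    ultimately show "sin (t - c) \<le> 0" by simp
  qed
  finally show ?thesis unfolding t_def c_def by simp
qed

lemma fold_comp: "fold (\<lambda>i g. h i \<circ> g) xs g x = fold (\<lambda>i v. h i v) xs (g x)"
  by (induct xs arbitrary: g) auto

lemma fsigma_eq: "fsigma fs \<sigma> 0 = fold lin (permute_list \<sigma> fs) 0"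
  unfolding fsigma_def permute_list_def
  by (simp add: fold_comp[where h="\<lambda>i. lin (fs ! \<sigma> i)"] fold_map comp_def)

lemma fold_ge:
  assumes "\<forall>y\<in>set ys. alpha y \<ge> 0 \<and> lin y m \<ge> m"
    and "\<forall>y\<in>set ys. alpha y = 0 \<longrightarrow> beta y \<ge> m"
    and "v \<ge> m \<or> (\<exists>y\<in>set ys. alpha y = 0)"
  shows "fold lin ys v \<ge> m"
  using assms
proof (induct ys arbitrary: v)
  case Nil
  then show ?case by simp
next
  case (Cons y ys)
  have "lin y v \<ge> m \<or> (\<exists>y\<in>set ys. alpha y = 0)"
  proof (cases "alpha y = 0")
    case True
    then show ?thesis using Cons.prems(2) by (simp add: lin_def)
  next
    case False
    show ?thesis
    proof (cases "v \<ge> m")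
      case True
      have "alpha y * m \<le> alpha y * v" using True Cons.prems(1) by (simp add: mult_left_mono)
      then have "lin y m \<le> lin y v" by (simp add: lin_def)
      then show ?thesis using Cons.prems(1) by simp
    next
      case False
      then show ?thesis using Cons.prems(3) \<open>alpha y \<noteq> 0\<close> by auto
    qed
  qed
  then show ?case using Cons by simp
qed

lemma cond_iff:
  "(theta f = None \<or> (\<exists>t. theta f = Some t \<and> t \<in> arc2pi (theta_const m - pi) (theta_const m)))
    \<longleftrightarrow> lin f m \<ge> m"
proof (cases "beta f = 0 \<and> 1 - alpha f = 0")
  case True
  then show ?thesis by (simp add: theta_def lin_def)
next
  case False
  then have "theta f = Some (polar_angle (beta f) (1 - alpha f))" by (simp add: theta_def)
  moreover have "polar_angle (beta f) (1 - alpha f) \<in> arc2pi (theta_const m - pi) (theta_const m)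
     \<longleftrightarrow> m * (1 - alpha f) - beta f \<le> 0" using arc_iff False by blast
  ultimately show ?thesis by (auto simp: lin_def algebra_simps)
qed

theorem mainTheorem16:
  fixes fs :: "linfun list"
  assumes nondec: "\<forall>f\<in>set fs. alpha f \<ge> 0"
    and has_const: "\<exists>f\<in>set fs. alpha f = 0"
  shows "Min {fsigma fs \<sigma> 0 | \<sigma>. \<sigma> permutes {..<length fs}}
           = Min {beta f | f. f \<in> set fs \<and> alpha f = 0}
       \<longleftrightarrow> (\<forall>f\<in>set fs. theta f = None \<or>
              (\<exists>t. theta f = Some t \<and>
                 t \<in> arc2pi (theta_const (Min {beta f | f. f \<in> set fs \<and> alpha f = 0}) - pi)
                             (theta_const (Min {beta f | f. f \<in> set fs \<and> alpha f = 0}))))"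
proof -
  define B where "B = {beta f | f. f \<in> set fs \<and> alpha f = 0}"
  define m where "m = Min B"
  define S where "S = {fsigma fs \<sigma> 0 | \<sigma>. \<sigma> permutes {..<length fs}}"
  have Bim: "B = beta ` {f \<in> set fs. alpha f = 0}" unfolding B_def by auto
  have fB: "finite B" "B \<noteq> {}" using has_const unfolding Bim by auto
  have mB: "m \<in> B" unfolding m_def using fB by simp
  then obtain p where p: "p \<in> set fs" "alpha p = 0" "beta p = m" unfolding B_def by auto
  have cge: "\<forall>y\<in>set fs. alpha y = 0 \<longrightarrow> beta y \<ge> m"
  proof (intro ballI impI)
    fix y assume "y \<in> set fs" "alpha y = 0"
    then have "beta y \<in> B" unfolding Bim by auto
    then show "beta y \<ge> m" unfolding m_def using fB(1) by simp
  qed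
  have Sim: "S = (\<lambda>\<sigma>. fsigma fs \<sigma> 0) ` {\<sigma>. \<sigma> permutes {..<length fs}}" unfolding S_def by auto
  have fS: "finite S" unfolding Sim using finite_permutations[of "{..<length fs}"] by simp
  have inS: "fold lin ys 0 \<in> S" if ms: "mset ys = mset fs" for ys
  proof -
    obtain \<sigma> where "\<sigma> permutes {..<length fs}" "permute_list \<sigma> fs = ys"
      using mset_eq_permutation[OF ms] by blast
    then show ?thesis unfolding S_def using fsigma_eq by auto
  qed
  have rhs: "(\<forall>f\<in>set fs. theta f = None \<or>
              (\<exists>t. theta f = Some t \<and> t \<in> arc2pi (theta_const m - pi) (theta_const m)))
           \<longleftrightarrow> (\<forall>f\<in>set fs. lin f m \<ge> m)" using cond_iff by blast
  have "Min S = m \<longleftrightarrow> (\<forall>f\<in>set fs. lin f m \<ge> m)"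
  proof
    assume h: "\<forall>f\<in>set fs. lin f m \<ge> m"
    have ge: "\<forall>x\<in>S. m \<le> x"
    proof
      fix x assume "x \<in> S"
      then obtain \<sigma> where s: "\<sigma> permutes {..<length fs}" "x = fold lin (permute_list \<sigma> fs) 0"
        unfolding S_def using fsigma_eq by auto
      have st: "set (permute_list \<sigma> fs) = set fs"
        using mset_permute_list[OF s(1)] by (metis set_mset_mset)
      show "m \<le> x" unfolding s(2)
        apply (rule fold_ge)
        using h nondec cge p st by auto
    qed
    have "p \<in># mset fs" using p(1) by (simp only: in_multiset_in_set)
    then have "mset (remove1 p fs @ [p]) = mset fs" by (simp add: insert_DiffM)
    then have "fold lin (remove1 p fs @ [p]) 0 \<in> S" by (rule inS)
    moreover have "fold lin (remove1 p fs @ [p]) 0 = m" using p by (simp add: lin_def)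
    ultimately have "m \<in> S" by simp
    then show "Min S = m" using ge fS by (intro Min_eqI) auto
  next
    assume h: "Min S = m"
    show "\<forall>f\<in>set fs. lin f m \<ge> m"
    proof (rule ccontr)
      assume "\<not> ?thesis"
      then obtain f where f: "f \<in> set fs" "lin f m < m" by auto
      have fp: "f \<noteq> p" using f p by (auto simp: lin_def)
      define ys where "ys = remove1 f (remove1 p fs) @ [p, f]"
      have "f \<in> set (remove1 p fs)" using f(1) fp by (simp add: in_set_remove1)
      then have "f \<in># mset (remove1 p fs)" by (simp only: in_multiset_in_set)
      then have e1: "add_mset f (mset (remove1 f (remove1 p fs))) = mset (remove1 p fs)"
        using insert_DiffM[of f "mset (remove1 p fs)"] mset_remove1[of f "remove1 p fs"] by metis
      have e2: "add_mset p (mset (remove1 p fs)) = mset fs" using p(1) by (simp add: insert_DiffM)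
      have "mset ys = add_mset p (add_mset f (mset (remove1 f (remove1 p fs))))"
        unfolding ys_def by (simp del: mset_remove1)
      then have "mset ys = mset fs" using e1 e2 by simp
      then have "fold lin ys 0 \<in> S" by (rule inS)
      moreover have "fold lin ys 0 = lin f m" unfolding ys_def using p by (simp add: lin_def)
      ultimately have "Min S \<le> lin f m" using fS by simp
      with h f show False by simp
    qed
  qed
  then show ?thesis using rhs unfolding S_def m_def B_def by simp
qed

end
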